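(* For every two-qubit density matrix $\sigma$ there exists a single-qubit unitary $U$ such that $$\bar F_{\mathrm{dummy}}=\bar F_{\mathrm{trap}}=F_{\mathrm{tel}}(\sigma),$$ where $\bar F_{\mathrm{dummy}}=\tfrac12\big(\langle 0|\Lambda_{\sigma,U}(|0\rangle\langle0|)|0\rangle+\langle 1|\Lambda_{\sigma,U}(|1\rangle\langle1|)|1\rangle\big)$, $\bar F_{\mathrm{trap}}=\tfrac18\sum_{\theta\in\Theta}\langle+_\theta|\Lambda_{\sigma,U}(|+_\theta\rangle\langle+_\theta|)|+_\theta\rangle$, and $F_{\mathrm{tel}}(\sigma)=\int\langle\psi|\Lambda_\sigma(|\psi\rangle\langle\psi|)|\psi\rangle\,d\psi$ with the integral over the Haar (uniform) measure on single-qubit pure states.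
   Context: $\Theta=\{i\pi/4\}_{0\le i\le7}$ and $|\pm_\theta\rangle=\frac1{\sqrt2}(|0\rangle\pm e^{i\theta}|1\rangle)$. Let $|\Phi^+\rangle=\frac1{\sqrt2}(|00\rangle+|11\rangle)$ and $|\Phi_{ij}\rangle=(X^iZ^j\otimes\mathbf 1)|\Phi^+\rangle$ for $i,j\in\{0,1\}$. For a two-qubit state $\sigma$ on registers $S$ (sender) and $R$ (receiver), the teleportation channel is $\Lambda_\sigma(\rho)=\sum_{i,j\in\{0,1\}}X^iZ^j\,\langle\Phi_{ij}|_{IS}(\rho_I\otimes\sigma_{SR})|\Phi_{ij}\rangle_{IS}\,(X^iZ^j)^\dagger$. For a single-qubit unitary $U$, the rotated teleportation channel is $\Lambda_{\sigma,U}(\rho)=U^\dagger\Lambda_\sigma(U\rho U^\dagger)U$. *)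

theory Defs
  imports "HOL-Analysis.Analysis"
begin

text \<open>Matrices are represented as functions nat => nat => complex, only the
entries with indices below the dimension being relevant.  Single-qubit
operators have dimension 2 (basis |0>, |1>); two-qubit operators on S (x) R
have dimension 4 with the basis |s r> encoded as index 2*s + r.\<close>

type_synonym cmat = "nat \<Rightarrow> nat \<Rightarrow> complex"
type_synonym cvec = "nat \<Rightarrow> complex"

definition mmul :: "nat \<Rightarrow> cmat \<Rightarrow> cmat \<Rightarrow> cmat" where
  "mmul n A B = (\<lambda>i j. \<Sum>k<n. A i k * B k j)"

definition adj :: "cmat \<Rightarrow> cmat" where
  "adj A = (\<lambda>i j. cnj (A j i))"

definition id_mat :: cmat where
  "id_mat = (\<lambda>i j. if i = j then 1 else 0)"

definition mat_eq :: "nat \<Rightarrow> cmat \<Rightarrow> cmat \<Rightarrow> bool" where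
  "mat_eq n A B \<longleftrightarrow> (\<forall>i<n. \<forall>j<n. A i j = B i j)"

definition unitary :: "nat \<Rightarrow> cmat \<Rightarrow> bool" where
  "unitary n U \<longleftrightarrow> mat_eq n (mmul n (adj U) U) id_mat \<and> mat_eq n (mmul n U (adj U)) id_mat"

definition density :: "nat \<Rightarrow> cmat \<Rightarrow> bool" where
  "density n \<sigma> \<longleftrightarrow>
     (\<forall>i<n. \<forall>j<n. \<sigma> i j = cnj (\<sigma> j i)) \<and>
     (\<forall>v::cvec. 0 \<le> Re (\<Sum>i<n. \<Sum>j<n. cnj (v i) * \<sigma> i j * v j)) \<and>
     (\<Sum>i<n. \<sigma> i i) = 1"

definition pauliX :: cmat where
  "pauliX = (\<lambda>a b. if a < 2 \<and> b < 2 \<and> a \<noteq> b then 1 else 0)"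

definition pauliZ :: cmat where
  "pauliZ = (\<lambda>a b. if a = b \<and> a = 0 then 1 else if a = b \<and> a = 1 then -1 else 0)"

definition pauliXZ :: "nat \<Rightarrow> nat \<Rightarrow> cmat" where
  "pauliXZ i j = mmul 2 (if i = 1 then pauliX else id_mat) (if j = 1 then pauliZ else id_mat)"

text \<open>Bell state |Phi_ij> = (X^i Z^j (x) 1)|Phi+> on registers I S, as amplitude
function of (a, s) with a the I-index and s the S-index.\<close>
definition bell :: "nat \<Rightarrow> nat \<Rightarrow> nat \<Rightarrow> nat \<Rightarrow> complex" where
  "bell i j a s = (\<Sum>b<2. pauliXZ i j a b * (if b = s then 1 / complex_of_real (sqrt 2) else 0))"

text \<open>The operator <Phi_ij|_{IS} (rho_I (x) sigma_SR) |Phi_ij>_{IS} on R.\<close>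
definition bell_proj :: "cmat \<Rightarrow> nat \<Rightarrow> nat \<Rightarrow> cmat \<Rightarrow> cmat" where
  "bell_proj \<sigma> i j \<rho> = (\<lambda>r1 r2.
     \<Sum>a<2. \<Sum>s<2. \<Sum>a2<2. \<Sum>s2<2.
        cnj (bell i j a s) * (\<rho> a a2 * \<sigma> (2 * s + r1) (2 * s2 + r2)) * bell i j a2 s2)"

definition tele :: "cmat \<Rightarrow> cmat \<Rightarrow> cmat" where
  "tele \<sigma> \<rho> = (\<lambda>r r'. \<Sum>i<2. \<Sum>j<2.
      mmul 2 (mmul 2 (pauliXZ i j) (bell_proj \<sigma> i j \<rho>)) (adj (pauliXZ i j)) r r')"

definition tele_rot :: "cmat \<Rightarrow> cmat \<Rightarrow> cmat \<Rightarrow> cmat" where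
  "tele_rot \<sigma> U \<rho> = mmul 2 (mmul 2 (adj U) (tele \<sigma> (mmul 2 (mmul 2 U \<rho>) (adj U)))) U"

definition ket_bra :: "cvec \<Rightarrow> cmat" where
  "ket_bra \<psi> = (\<lambda>i j. \<psi> i * cnj (\<psi> j))"

definition expect :: "cvec \<Rightarrow> cmat \<Rightarrow> complex" where
  "expect \<psi> M = (\<Sum>i<2. \<Sum>j<2. cnj (\<psi> i) * M i j * \<psi> j)"

definition ket0 :: cvec where "ket0 = (\<lambda>i. if i = 0 then 1 else 0)"
definition ket1 :: cvec where "ket1 = (\<lambda>i. if i = 1 then 1 else 0)"

definition ket_plus :: "real \<Rightarrow> cvec" where
  "ket_plus \<theta> = (\<lambda>i. if i = 0 then 1 / complex_of_real (sqrt 2)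
                     else if i = 1 then cis \<theta> / complex_of_real (sqrt 2) else 0)"

definition Theta :: "real set" where
  "Theta = {real k * pi / 4 | k. k < (8::nat)}"

definition F_dummy :: "cmat \<Rightarrow> cmat \<Rightarrow> complex" where
  "F_dummy \<sigma> U = (expect ket0 (tele_rot \<sigma> U (ket_bra ket0))
                   + expect ket1 (tele_rot \<sigma> U (ket_bra ket1))) / 2"

definition F_trap :: "cmat \<Rightarrow> cmat \<Rightarrow> complex" where
  "F_trap \<sigma> U = (\<Sum>\<theta>\<in>Theta. expect (ket_plus \<theta>) (tele_rot \<sigma> U (ket_bra (ket_plus \<theta>)))) / 8"

text \<open>The Haar (uniform) measure on pure
  single-qubit states is the normalised surface measure on the Bloch sphere,
  i.e. the density sin t / (4 pi) on [0,pi] x [0,2pi].\<close>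
definition bloch_state :: "real \<Rightarrow> real \<Rightarrow> cvec" where
  "bloch_state t \<phi> = (\<lambda>i. if i = 0 then complex_of_real (cos (t/2))
                          else if i = 1 then cis \<phi> * complex_of_real (sin (t/2)) else 0)"

definition F_tel :: "cmat \<Rightarrow> complex" where
  "F_tel \<sigma> = (LINT p : {0..pi} \<times> {0..2*pi} | lborel.
      complex_of_real (sin (fst p) / (4 * pi)) *
      expect (bloch_state (fst p) (snd p)) (tele \<sigma> (ket_bra (bloch_state (fst p) (snd p)))))"

end

theory Submission
  imports Defs
begin


lemma sum2: "(\<Sum>k<(2::nat). f k) = f 0 + f 1" by (simp add: numeral_2_eq_2)

lemma pv:
  "pauliXZ 0 0 0 0 = 1" "pauliXZ 0 0 0 1 = 0" "pauliXZ 0 0 1 0 = 0" "pauliXZ 0 0 1 1 = 1"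
  "pauliXZ 0 1 0 0 = 1" "pauliXZ 0 1 0 1 = 0" "pauliXZ 0 1 1 0 = 0" "pauliXZ 0 1 1 1 = -1"
  "pauliXZ 1 0 0 0 = 0" "pauliXZ 1 0 0 1 = 1" "pauliXZ 1 0 1 0 = 1" "pauliXZ 1 0 1 1 = 0"
  "pauliXZ 1 1 0 0 = 0" "pauliXZ 1 1 0 1 = -1" "pauliXZ 1 1 1 0 = 1" "pauliXZ 1 1 1 1 = 0"
  unfolding pauliXZ_def mmul_def sum2 by (simp_all add: id_mat_def pauliX_def pauliZ_def)

lemmas pv' = pv[unfolded One_nat_def]

abbreviation "h \<equiv> 1 / complex_of_real (sqrt 2)"

lemma bellv:
 "bell 0 0 0 0 = h" "bell 0 0 0 1 = 0" "bell 0 0 1 0 = 0" "bell 0 0 1 1 = h"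
 "bell 0 1 0 0 = h" "bell 0 1 0 1 = 0" "bell 0 1 1 0 = 0" "bell 0 1 1 1 = -h"
 "bell 1 0 0 0 = 0" "bell 1 0 0 1 = h" "bell 1 0 1 0 = h" "bell 1 0 1 1 = 0"
 "bell 1 1 0 0 = 0" "bell 1 1 0 1 = -h" "bell 1 1 1 0 = h" "bell 1 1 1 1 = 0"
  unfolding bell_def sum2 by (simp_all add: pv pv')

lemma bp: "bell_proj \<sigma> i j \<rho> r1 r2 = (\<Sum>a<2. \<Sum>s<2. \<Sum>a2<2. \<Sum>s2<2.
        cnj (bell i j a s) * bell i j a2 s2 * (\<rho> a a2 * \<sigma> (2 * s + r1) (2 * s2 + r2)))"
  unfolding bell_proj_def by (simp add: mult_ac)

lemma s2: "complex_of_real (sqrt 2) * complex_of_real (sqrt 2) = 2"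
  by (simp flip: of_real_mult)
lemma hh: "cnj h * h = 1/2"
  by (simp add: field_simps s2) 

lemma bps: "bell_proj \<sigma> 0 0 \<rho> r1 r2 = (\<rho> 0 0 * \<sigma> r1 r2 + \<rho> 0 1 * \<sigma> r1 (2+r2) + \<rho> 1 0 * \<sigma> (2+r1) r2 + \<rho> 1 1 * \<sigma> (2+r1) (2+r2))/2"
  "bell_proj \<sigma> 0 1 \<rho> r1 r2 = (\<rho> 0 0 * \<sigma> r1 r2 - \<rho> 0 1 * \<sigma> r1 (2+r2) - \<rho> 1 0 * \<sigma> (2+r1) r2 + \<rho> 1 1 * \<sigma> (2+r1) (2+r2))/2"
  "bell_proj \<sigma> 1 0 \<rho> r1 r2 = (\<rho> 0 0 * \<sigma> (2+r1) (2+r2) + \<rho> 0 1 * \<sigma> (2+r1) r2 + \<rho> 1 0 * \<sigma> r1 (2+r2) + \<rho> 1 1 * \<sigma> r1 r2)/2"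
  "bell_proj \<sigma> 1 1 \<rho> r1 r2 = (\<rho> 0 0 * \<sigma> (2+r1) (2+r2) - \<rho> 0 1 * \<sigma> (2+r1) r2 - \<rho> 1 0 * \<sigma> r1 (2+r2) + \<rho> 1 1 * \<sigma> r1 r2)/2"
  unfolding bp sum2 bellv by (simp_all add: hh add_divide_distrib s2 diff_divide_distrib)

lemma tele_expl: "tele \<sigma> \<rho> r r' = (\<Sum>i<2. \<Sum>j<2. \<Sum>l<2. \<Sum>k<2. pauliXZ i j r k * bell_proj \<sigma> i j \<rho> k l * cnj (pauliXZ i j r' l))"
  unfolding tele_def mmul_def adj_def by (simp add: sum_distrib_right)

lemma tele00: "tele \<sigma> \<rho> 0 0 = \<rho> 0 0 * (\<sigma> 0 0 + \<sigma> 3 3) + \<rho> 1 1 * (\<sigma> 1 1 + \<sigma> 2 2)"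
  unfolding tele_expl sum2
  apply (simp add: pv pv')
  apply (simp only: bps[unfolded One_nat_def])
  apply simp
  apply (simp only: diff_divide_distrib[symmetric] add_divide_distrib[symmetric])
  apply (simp add: algebra_simps)
  done
lemma tele11: "tele \<sigma> \<rho> 1 1 = \<rho> 0 0 * (\<sigma> 1 1 + \<sigma> 2 2) + \<rho> 1 1 * (\<sigma> 0 0 + \<sigma> 3 3)"
  unfolding tele_expl sum2
  apply (simp add: pv pv')
  apply (simp only: bps[unfolded One_nat_def])
  apply simp
  apply (simp only: diff_divide_distrib[symmetric] add_divide_distrib[symmetric])
  apply (simp add: algebra_simps)
  done
lemma tele01: "tele \<sigma> \<rho> 0 1 = \<rho> 0 1 * (\<sigma> 0 3 + \<sigma> 3 0) + \<rho> 1 0 * (\<sigma> 1 2 + \<sigma> 2 1)"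
  unfolding tele_expl sum2
  apply (simp add: pv pv')
  apply (simp only: bps[unfolded One_nat_def])
  apply simp
  apply (simp only: diff_divide_distrib[symmetric] add_divide_distrib[symmetric])
  apply (simp add: algebra_simps)
  done
lemma tele10: "tele \<sigma> \<rho> 1 0 = \<rho> 0 1 * (\<sigma> 1 2 + \<sigma> 2 1) + \<rho> 1 0 * (\<sigma> 0 3 + \<sigma> 3 0)"
  unfolding tele_expl sum2
  apply (simp add: pv pv')
  apply (simp only: bps[unfolded One_nat_def])
  apply simp
  apply (simp only: diff_divide_distrib[symmetric] add_divide_distrib[symmetric])
  apply (simp add: algebra_simps)
  done

definition Gf :: "cmat \<Rightarrow> complex \<Rightarrow> complex \<Rightarrow> complex" where
"Gf \<sigma> x y = (x*cnj x*x*cnj x + y*cnj y*y*cnj y) * (\<sigma> 0 0 + \<sigma> 3 3)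
   + 2*(x*cnj x*y*cnj y)*(\<sigma> 0 3 + \<sigma> 3 0 + \<sigma> 1 1 + \<sigma> 2 2)
   + ((cnj x*y)^2 + (x*cnj y)^2)*(\<sigma> 1 2 + \<sigma> 2 1)"

lemma G: "expect \<psi> (tele \<sigma> (ket_bra \<psi>)) = Gf \<sigma> (\<psi> 0) (\<psi> 1)"
  unfolding expect_def sum2 tele00 tele11 tele01 tele10 ket_bra_def Gf_def
  by (simp add: algebra_simps power2_eq_square)



lemma GfI: "x*cnj x = A \<Longrightarrow> y*cnj y = B \<Longrightarrow> (cnj x*y)^2 + (x*cnj y)^2 = Z \<Longrightarrow>
  Gf \<sigma> x y = (A*A + B*B) * (\<sigma> 0 0 + \<sigma> 3 3) + 2*A*B*(\<sigma> 0 3 + \<sigma> 3 0 + \<sigma> 1 1 + \<sigma> 2 2)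
   + Z*(\<sigma> 1 2 + \<sigma> 2 1)"
  unfolding Gf_def by (simp add: algebra_simps)

lemma cis_plus: "cis a + cis (-a) = complex_of_real (2 * cos a)"
  by (simp add: complex_eq_iff)

lemma ftc_real:
  fixes F f :: "real \<Rightarrow> real"
  assumes "a \<le> b" "\<And>x. (F has_real_derivative f x) (at x)"
  shows "integral {a..b} f = F b - F a"
proof -
  have "(f has_integral (F b - F a)) {a..b}"
    by (rule fundamental_theorem_of_calculus[OF assms(1)])
       (auto simp: has_real_derivative_iff_has_vector_derivative[symmetric] intro: has_field_derivative_at_within assms(2))
  then show ?thesis by (rule integral_unique)
qed

definition g1 :: "real \<times> real \<Rightarrow> real" where
  "g1 p = sin (fst p/2) * cos (fst p/2) * (cos (fst p/2)^4 + sin (fst p/2)^4) / (2*pi)"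
definition g2 :: "real \<times> real \<Rightarrow> real" where
  "g2 p = sin (fst p/2) * cos (fst p/2) * (2 * cos (fst p/2)^2 * sin (fst p/2)^2) / (2*pi)"
definition g3 :: "real \<times> real \<Rightarrow> real" where
  "g3 p = sin (fst p/2) * cos (fst p/2) * (2 * cos (fst p/2)^2 * sin (fst p/2)^2) / (2*pi) * cos (2 * snd p)"

lemma integrand_eq:
  "complex_of_real (sin (fst p) / (4 * pi)) *
      expect (bloch_state (fst p) (snd p)) (tele \<sigma> (ket_bra (bloch_state (fst p) (snd p))))
   = (\<sigma> 0 0 + \<sigma> 3 3) * of_real (g1 p) + (\<sigma> 0 3 + \<sigma> 3 0 + \<sigma> 1 1 + \<sigma> 2 2) * of_real (g2 p)
     + (\<sigma> 1 2 + \<sigma> 2 1) * of_real (g3 p)"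
proof -
  obtain t \<phi> where p: "p = (t, \<phi>)" by (cases p)
  define c where "c = cos (t/2)"
  define s where "s = sin (t/2)"
  have st: "sin t = 2 * s * c" unfolding s_def c_def using sin_double[of "t/2"] by simp
  have "Gf \<sigma> (complex_of_real c) (cis \<phi> * complex_of_real s) =
     (of_real (c^2) * of_real (c^2) + of_real (s^2) * of_real (s^2)) * (\<sigma> 0 0 + \<sigma> 3 3)
     + 2 * of_real (c^2) * of_real (s^2) * (\<sigma> 0 3 + \<sigma> 3 0 + \<sigma> 1 1 + \<sigma> 2 2)
     + of_real (c^2 * s^2 * (2 * cos (2 * \<phi>))) * (\<sigma> 1 2 + \<sigma> 2 1)"
  proof (rule GfI)
    show "complex_of_real c * cnj (complex_of_real c) = complex_of_real (c\<^sup>2)"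
      by (simp add: power2_eq_square)
    show "cis \<phi> * complex_of_real s * cnj (cis \<phi> * complex_of_real s) = complex_of_real (s\<^sup>2)"
      by (simp add: power2_eq_square cis_cnj algebra_simps cis_mult)
    have "(cnj (complex_of_real c) * (cis \<phi> * complex_of_real s))\<^sup>2 +
      (complex_of_real c * cnj (cis \<phi> * complex_of_real s))\<^sup>2
      = complex_of_real (c^2 * s^2) * (cis \<phi> ^ 2 + cis (-\<phi>) ^ 2)"
      by (simp add: power_mult_distrib cis_cnj algebra_simps)
    also have "\<dots> = complex_of_real (c^2 * s^2) * (cis (2*\<phi>) + cis (-(2*\<phi>)))"
      using Complex.DeMoivre[of \<phi> 2] Complex.DeMoivre[of "-\<phi>" 2] by simp
    also have "\<dots> = complex_of_real (c\<^sup>2 * s\<^sup>2 * (2 * cos (2 * \<phi>)))"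
      by (simp only: cis_plus of_real_mult)
    finally show "(cnj (complex_of_real c) * (cis \<phi> * complex_of_real s))\<^sup>2 +
      (complex_of_real c * cnj (cis \<phi> * complex_of_real s))\<^sup>2 =
      complex_of_real (c\<^sup>2 * s\<^sup>2 * (2 * cos (2 * \<phi>)))" .
  qed
  moreover have "bloch_state t \<phi> 0 = complex_of_real c" "bloch_state t \<phi> 1 = cis \<phi> * complex_of_real s"
    by (simp_all add: bloch_state_def c_def s_def)
  ultimately show ?thesis
    unfolding p G g1_def g2_def g3_def
    apply (simp add: st)
    apply (simp add: c_def[symmetric] s_def[symmetric] field_simps)
    done
qed




lemma R_eq: "{0..pi} \<times> {0..2*pi} = cbox (0::real,0::real) (pi,2*pi)"
  by (simp add: cbox_Pair_eq)

lemma int1: "integral {0..pi} (\<lambda>t. integral {0..2*pi} (\<lambda>\<phi>. g1 (t,\<phi>))) = 2/3"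
proof -
  have "\<And>t. integral {0..2*pi} (\<lambda>\<phi>. g1 (t,\<phi>)) = sin(t/2)*cos(t/2)*(cos(t/2)^4+sin(t/2)^4)"
    by (simp add: g1_def)
  then have "integral {0..pi} (\<lambda>t. integral {0..2*pi} (\<lambda>\<phi>. g1 (t,\<phi>)))
     = integral {0..pi} (\<lambda>t. sin(t/2)*cos(t/2)*(cos(t/2)^4+sin(t/2)^4))" by simp
  also have "\<dots> = (sin(pi/2)^6 - cos(pi/2)^6)/3 - (sin(0/2)^6 - cos(0/2)^6)/3"
    by (rule ftc_real[where F="\<lambda>t. (sin(t/2)^6 - cos(t/2)^6)/3"])
       (auto intro!: derivative_eq_intros simp: field_simps power_def)
  finally show ?thesis by simp
qed

lemma int2: "integral {0..pi} (\<lambda>t. integral {0..2*pi} (\<lambda>\<phi>. g2 (t,\<phi>))) = 1/3"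
proof -
  have "\<And>t. integral {0..2*pi} (\<lambda>\<phi>. g2 (t,\<phi>)) = 2 * sin (t/2) ^ 3 * cos (t/2) ^ 3"
    by (simp add: g2_def power_def)
  then have "integral {0..pi} (\<lambda>t. integral {0..2*pi} (\<lambda>\<phi>. g2 (t,\<phi>)))
     = integral {0..pi} (\<lambda>t. 2 * sin (t/2) ^ 3 * cos (t/2) ^ 3)" by simp
  also have "\<dots> = (sin(pi/2)^4 - 2/3* sin(pi/2)^6) - (sin(0/2)^4 - 2/3* sin(0/2)^6)"
  proof (rule ftc_real[where F="\<lambda>t. sin(t/2)^4 - 2/3* sin(t/2)^6"])
    fix x :: real
    have c2: "cos(x/2)^2 = 1 - sin(x/2)^2" by (simp add: cos_squared_eq)
    have d: "((\<lambda>t. sin(t/2)^4 - 2/3* sin(t/2)^6) has_real_derivative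
        (2 * sin (x/2)^3 * cos (x/2) - 2 * sin (x/2)^5 * cos (x/2))) (at x)"
      by (auto intro!: derivative_eq_intros simp: field_simps)
    have e: "2 * sin (x/2)^3 * cos (x/2) - 2 * sin (x/2)^5 * cos (x/2) = 2 * sin (x/2) ^ 3 * cos (x/2) ^ 3"
      using c2 by algebra
    show "((\<lambda>t. sin(t/2)^4 - 2/3* sin(t/2)^6) has_real_derivative 2 * sin (x/2) ^ 3 * cos (x/2) ^ 3) (at x)"
      using d unfolding e .
  qed simp
  finally show ?thesis by simp
qed

lemma int3: "integral {0..pi} (\<lambda>t. integral {0..2*pi} (\<lambda>\<phi>. g3 (t,\<phi>))) = 0"
proof -
  have c: "integral {0..2*pi} (\<lambda>\<phi>. cos (2*\<phi>)) = 0"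
  proof -
    have "integral {0..2*pi} (\<lambda>\<phi>. cos (2*\<phi>)) = sin(2*(2*pi))/2 - sin(2*0)/2"
      by (rule ftc_real) (auto intro!: derivative_eq_intros)
    also have "sin(2*(2*pi)) = sin (real 4 * pi)" by (simp add: mult.assoc)
    finally show ?thesis by (simp only: sin_npi) simp
  qed
  have "\<And>t. integral {0..2*pi} (\<lambda>\<phi>. g3 (t,\<phi>)) = 0"
    unfolding g3_def by (simp add: c)
  then show ?thesis by simp
qed




definition Fval :: "cmat \<Rightarrow> complex" where
  "Fval \<sigma> = (2 * (\<sigma> 0 0 + \<sigma> 3 3) + (\<sigma> 0 3 + \<sigma> 3 0 + \<sigma> 1 1 + \<sigma> 2 2)) / 3"

lemma set_int_cont:
  fixes f :: "'a::euclidean_space \<Rightarrow> 'b::{banach, second_countable_topology}"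
  shows "compact S \<Longrightarrow> continuous_on S f \<Longrightarrow> set_integrable lborel S f"
  by (simp add: set_integrable_def borel_integrable_compact)

lemma cR: "compact ({0..pi} \<times> {0..2*pi::real})"
  by (intro compact_Times compact_Icc)

lemma cg: "continuous_on S g1" "continuous_on S g2" "continuous_on S g3"
  unfolding g1_def g2_def g3_def by (auto intro!: continuous_intros)

lemma real_int:
  fixes g :: "real \<times> real \<Rightarrow> real"
  assumes "continuous_on UNIV g"
  shows "(LINT p : {0..pi} \<times> {0..2*pi} | lborel. g p) =
    integral {0..pi} (\<lambda>t. integral {0..2*pi} (\<lambda>\<phi>. g (t,\<phi>)))"
proof -
  have si: "set_integrable lborel ({0..pi} \<times> {0..2*pi}) g"
    using set_int_cont[OF cR continuous_on_subset[OF assms]] by simp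
  have "(LINT p : {0..pi} \<times> {0..2*pi} | lborel. g p) = integral ({0..pi} \<times> {0..2*pi}) g"
    by (rule set_borel_integral_eq_integral(2)[OF si])
  also have "\<dots> = integral (cbox (0,0) (pi,2*pi)) g" by (simp only: R_eq)
  also have "\<dots> = integral (cbox 0 pi) (\<lambda>t. integral (cbox 0 (2*pi)) (\<lambda>\<phi>. g (t,\<phi>)))"
    by (rule integral_prod_continuous) (rule continuous_on_subset[OF assms], simp)
  finally show ?thesis by simp
qed

lemma Ftel: "F_tel \<sigma> = Fval \<sigma>"
proof -
  let ?R = "{0..pi} \<times> {0..2*pi::real}"
  let ?a = "\<sigma> 0 0 + \<sigma> 3 3" and ?b = "\<sigma> 0 3 + \<sigma> 3 0 + \<sigma> 1 1 + \<sigma> 2 2" and ?c = "\<sigma> 1 2 + \<sigma> 2 1"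
  have si: "set_integrable lborel ?R (\<lambda>p. k * complex_of_real (g p))" if "continuous_on UNIV g" for k and g :: "real \<times> real \<Rightarrow> real"
    by (rule set_int_cont[OF cR], intro continuous_intros continuous_on_subset[OF that] subset_UNIV)
  have "F_tel \<sigma> = (LINT p : ?R | lborel. ?a * of_real (g1 p) + ?b * of_real (g2 p) + ?c * of_real (g3 p))"
    unfolding F_tel_def integrand_eq by simp
  also have "\<dots> = ?a * of_real (LINT p : ?R | lborel. g1 p) + ?b * of_real (LINT p : ?R | lborel. g2 p)
      + ?c * of_real (LINT p : ?R | lborel. g3 p)"
    by (subst set_integral_add(2), (intro set_integral_add(1) si cg)+)+
       (simp add: set_integral_complex_of_real)
  also have "\<dots> = Fval \<sigma>"
    unfolding real_int[OF cg(1)] real_int[OF cg(2)] real_int[OF cg(3)] int1 int2 int3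
    by (simp add: Fval_def field_simps)
  finally show ?thesis .
qed




lemma rot_ket: "mmul 2 (mmul 2 U (ket_bra \<psi>)) (adj U) = ket_bra (\<lambda>i. U i 0 * \<psi> 0 + U i 1 * \<psi> 1)"
  unfolding mmul_def sum2 ket_bra_def adj_def by (simp add: fun_eq_iff algebra_simps)

lemma rot_exp: "expect \<psi> (mmul 2 (mmul 2 (adj U) X) U) = expect (\<lambda>i. U i 0 * \<psi> 0 + U i 1 * \<psi> 1) X"
  unfolding mmul_def sum2 expect_def adj_def by (simp add: algebra_simps)

lemma rot: "expect \<psi> (tele_rot \<sigma> U (ket_bra \<psi>)) = Gf \<sigma> (U 0 0 * \<psi> 0 + U 0 1 * \<psi> 1) (U 1 0 * \<psi> 0 + U 1 1 * \<psi> 1)"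
  unfolding tele_rot_def rot_ket rot_exp G by simp

definition cc :: real where "cc = sqrt ((3 + sqrt 3) / 6)"
definition ss :: real where "ss = sqrt ((3 - sqrt 3) / 6)"
definition EE :: complex where "EE = cis (pi/4)"

definition U0 :: cmat where
  "U0 = (\<lambda>i j. if i = 0 \<and> j = 0 then complex_of_real cc
     else if i = 0 \<and> j = 1 then - (cnj EE * complex_of_real ss)
     else if i = 1 \<and> j = 0 then EE * complex_of_real ss
     else if i = 1 \<and> j = 1 then complex_of_real cc else 0)"

lemma s3: "sqrt 3 \<le> (3::real)"
  by (rule real_le_lsqrt) auto

lemma cc2: "cc^2 = (3 + sqrt 3) / 6" unfolding cc_def by simp
lemma ss2: "ss^2 = (3 - sqrt 3) / 6" unfolding ss_def using s3 by simp
lemma cs1: "cc^2 + ss^2 = 1" unfolding cc2 ss2 by (simp add: field_simps)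
lemma cs6: "cc^2 * ss^2 = 1/6"
proof -
  have "cc^2 * ss^2 = (9 - sqrt 3 ^ 2) / 36" unfolding cc2 ss2 by (simp add: field_simps power2_eq_square)
  then show ?thesis by simp
qed

lemma C1: "complex_of_real cc * complex_of_real cc + complex_of_real ss * complex_of_real ss = 1"
  using cs1 by (simp flip: of_real_mult of_real_add add: power2_eq_square)
lemma C6: "complex_of_real cc * complex_of_real cc * (complex_of_real ss * complex_of_real ss) = 1/6"
  using arg_cong[OF cs6, of complex_of_real] by (simp add: power2_eq_square)

lemma C1': "complex_of_real ss * complex_of_real ss + complex_of_real cc * complex_of_real cc = 1"
  by (metis C1 add.commute)
lemma C6': "complex_of_real ss * complex_of_real ss * (complex_of_real cc * complex_of_real cc) = 1/6"
  by (metis C6 mult.commute)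

lemma EE1: "EE * cnj EE = 1" unfolding EE_def by (simp add: cis_cnj cis_mult)
lemma EE1a: "EE * (cnj EE * x) = x" using EE1 by (simp add: mult.assoc[symmetric])
lemma EE1b: "cnj EE * (EE * x) = x" using EE1 by (simp add: mult.assoc[symmetric] mult.commute)
lemma EE2: "EE * EE = \<i>"
proof -
  have "EE * EE = cis (pi/4 + pi/4)" unfolding EE_def by (simp add: cis_mult)
  also have "pi/4 + pi/4 = pi/2" by simp
  finally show ?thesis by simp
qed
lemma EE2c: "cnj EE * cnj EE = - \<i>"
  using arg_cong[OF EE2, of cnj] by simp

lemma unitU0: "unitary 2 U0"
  unfolding unitary_def mat_eq_def mmul_def sum2 adj_def
  apply (auto simp: U0_def id_mat_def less_2_cases_iff)
  using C1 EE1 by (auto simp: algebra_simps EE1a EE1b)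

lemma keyAB: "A + B = 1 \<Longrightarrow> A * B = 1/6 \<Longrightarrow> (A*A + B*B) * X + 2*A*B*Y + 0 * W = (2*X+Y)/(3::complex)"
proof -
  assume a: "A + B = 1" and b: "A * B = 1/6"
  have "A*A + B*B = (A+B)*(A+B) - 2*(A*B)" by (simp add: algebra_simps)
  also have "\<dots> = 2/3" unfolding a b by simp
  finally have c: "A*A + B*B = 2/3" .
  have "2*A*B = 2*(A*B)" by (simp only: mult.assoc)
  also have "\<dots> = 1/3" unfolding b by simp
  finally have d: "2*A*B = 1/3" .
  show ?thesis unfolding c d by (simp add: field_simps)
qed

lemma dummy: "F_dummy \<sigma> U0 = Fval \<sigma>"
proof -
  let ?C = "complex_of_real cc" and ?S = "complex_of_real ss"
  have g1: "Gf \<sigma> ?C (EE * ?S) = Fval \<sigma>"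
  proof -
    have "Gf \<sigma> ?C (EE * ?S) = (?C*?C * (?C*?C) + ?S*?S*(?S*?S)) * (\<sigma> 0 0 + \<sigma> 3 3) + 2*(?C*?C)*(?S*?S)*(\<sigma> 0 3 + \<sigma> 3 0 + \<sigma> 1 1 + \<sigma> 2 2)
       + 0 * (\<sigma> 1 2 + \<sigma> 2 1)"
    proof (rule GfI)
      show "?C * cnj ?C = ?C * ?C" by simp
      show "EE * ?S * cnj (EE * ?S) = ?S * ?S" using EE1 by (simp add: algebra_simps)
      have "(cnj ?C * (EE * ?S))\<^sup>2 + (?C * cnj (EE * ?S))\<^sup>2 = (?C*?C*?S*?S) * (EE*EE + cnj EE * cnj EE)"
        by (simp add: power2_eq_square algebra_simps)
      then show "(cnj ?C * (EE * ?S))\<^sup>2 + (?C * cnj (EE * ?S))\<^sup>2 = 0" by (simp add: EE2 EE2c)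
    qed
    also have "\<dots> = Fval \<sigma>" unfolding Fval_def by (rule keyAB[OF C1 C6])
    finally show ?thesis .
  qed
  have g2: "Gf \<sigma> (- (cnj EE * ?S)) ?C = Fval \<sigma>"
  proof -
    have "Gf \<sigma> (- (cnj EE * ?S)) ?C = (?S*?S*(?S*?S) + ?C*?C * (?C*?C)) * (\<sigma> 0 0 + \<sigma> 3 3) + 2*(?S*?S)*(?C*?C)*(\<sigma> 0 3 + \<sigma> 3 0 + \<sigma> 1 1 + \<sigma> 2 2)
       + 0 * (\<sigma> 1 2 + \<sigma> 2 1)"
    proof (rule GfI)
      show "?C * cnj ?C = ?C * ?C" by simp
      show "- (cnj EE * ?S) * cnj (- (cnj EE * ?S)) = ?S * ?S" using EE1 by (simp add: algebra_simps)
      have "(cnj (- (cnj EE * ?S)) * ?C)\<^sup>2 + (- (cnj EE * ?S) * cnj ?C)\<^sup>2 = (?C*?C*?S*?S) * (EE*EE + cnj EE * cnj EE)"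
        by (simp add: power2_eq_square algebra_simps)
      then show "(cnj (- (cnj EE * ?S)) * ?C)\<^sup>2 + (- (cnj EE * ?S) * cnj ?C)\<^sup>2 = 0" by (simp add: EE2 EE2c)
    qed
    also have "\<dots> = Fval \<sigma>" unfolding Fval_def by (rule keyAB[OF C1' C6'])
    finally show ?thesis .
  qed
  show ?thesis
    unfolding F_dummy_def rot using g1 g2 by (simp add: U0_def ket0_def ket1_def)
qed




lemma trapalg:
  fixes C S E w h x y :: complex
  assumes cC: "cnj C = C" and cS: "cnj S = S" and cE: "E*cnj E = 1" and cw: "w*cnj w = 1"
    and hh: "h*h = 1/2" and ch: "cnj h = h" and CS1: "C*C+S*S = 1" and CS6: "C*C*(S*S) = 1/6"
    and E2: "E*E = \<i>" and E2c: "cnj E*cnj E = -\<i>"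
    and x: "x = C*h - cnj E*S*w*h" and y: "y = E*S*h + C*w*h"
  shows "Gf \<sigma> x y = (\<sigma> 0 0 + \<sigma> 3 3) * (1/2 + (2 + \<i>*(cnj w*cnj w) - \<i>*(w*w))/12)
     + (\<sigma> 0 3 + \<sigma> 3 0 + \<sigma> 1 1 + \<sigma> 2 2) * (1/2 - (2 + \<i>*(cnj w*cnj w) - \<i>*(w*w))/12)
     + (\<sigma> 1 2 + \<sigma> 2 1) * ((C*C - S*S)*(w*w + cnj w*cnj w)/4)"
proof -
  define T where "T = E*cnj w + cnj E*w"
  have A0: "x*cnj x = h*h*(C*C + S*S*((E*cnj E)*(w*cnj w)) - C*S*T)"
    unfolding x T_def by (simp add: cC cS ch algebra_simps)
  have A: "x*cnj x = (1 - C*S*T)/2"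
    unfolding A0 cE cw hh using CS1 by (simp add: field_simps)
  have B0: "y*cnj y = h*h*(S*S*(E*cnj E) + C*C*(w*cnj w) + C*S*T)"
    unfolding y T_def by (simp add: cC cS ch algebra_simps)
  have B: "y*cnj y = (1 + C*S*T)/2"
    unfolding B0 cE cw hh using CS1 by (simp add: field_simps)
  have Z1: "cnj x * y = h*h*(C*C*w - (E*E)*S*S*cnj w + C*E*S*(1 - w*cnj w))"
    unfolding x y by (simp add: cC cS ch algebra_simps)
  have Z2: "x * cnj y = h*h*(C*C*cnj w - (cnj E*cnj E)*S*S*w + C*cnj E*S*(1 - w*cnj w))"
    unfolding x y by (simp add: cC cS ch algebra_simps)
  have Z: "(cnj x * y)^2 + (x * cnj y)^2 = (C*C - S*S)*(w*w + cnj w*cnj w)/4"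
  proof -
    have "(cnj x * y)^2 + (x * cnj y)^2 = ((C*C*w - \<i>*S*S*cnj w)/2)^2 + ((C*C*cnj w + \<i>*S*S*w)/2)^2"
      unfolding Z1 Z2 E2 E2c cw hh by (simp add: field_simps)
    also have "\<dots> = ((C*C)*(C*C) - (S*S)*(S*S))*(w*w + cnj w*cnj w)/4"
      by (simp add: field_simps power2_eq_square)
    also have "(C*C)*(C*C) - (S*S)*(S*S) = (C*C - S*S)*(C*C+S*S)" by (simp add: algebra_simps)
    finally show ?thesis unfolding CS1 by simp
  qed
  have T2: "T*T = 2 + \<i>*(cnj w*cnj w) - \<i>*(w*w)"
  proof -
    have "T*T = (E*E)*(cnj w*cnj w) + 2*(E*cnj E)*(w*cnj w) + (cnj E*cnj E)*(w*w)"
      unfolding T_def by (simp add: algebra_simps)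
    then show ?thesis unfolding E2 E2c cE cw by simp
  qed
  have AB1: "(1 - C*S*T)/2 * ((1 - C*S*T)/2) + (1 + C*S*T)/2 * ((1 + C*S*T)/2) = 1/2 + (C*C*(S*S))*(T*T)/2"
    by (simp add: field_simps)
  have AB2: "2 * ((1 - C*S*T)/2) * ((1 + C*S*T)/2) = 1/2 - (C*C*(S*S))*(T*T)/2"
    by (simp add: field_simps)
  show ?thesis
    unfolding GfI[OF A B Z] AB1 AB2 CS6 T2 by (simp add: field_simps)
qed




lemma trapk:
  "expect (ket_plus (real k * pi/4)) (tele_rot \<sigma> U0 (ket_bra (ket_plus (real k * pi/4))))
   = (\<sigma> 0 0 + \<sigma> 3 3) * (1/2 + (2 + \<i>*((-\<i>)^k) - \<i>*(\<i>^k))/12)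
     + (\<sigma> 0 3 + \<sigma> 3 0 + \<sigma> 1 1 + \<sigma> 2 2) * (1/2 - (2 + \<i>*((-\<i>)^k) - \<i>*(\<i>^k))/12)
     + (\<sigma> 1 2 + \<sigma> 2 1) * ((complex_of_real cc * complex_of_real cc - complex_of_real ss * complex_of_real ss)*(\<i>^k + (-\<i>)^k)/4)"
proof -
  define w where "w = cis (real k * pi/4)"
  define h where "h = 1 / complex_of_real (sqrt 2)"
  have ww: "w*w = \<i>^k"
  proof -
    have "w*w = cis (real k * pi/4 + real k * pi/4)" unfolding w_def by (simp add: cis_mult)
    also have "real k * pi/4 + real k * pi/4 = real k * (pi/2)" by simp
    also have "cis (real k * (pi/2)) = \<i> ^ k" using Complex.DeMoivre[of "pi/2" k] by simp
    finally show ?thesis by simp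
  qed
  have cww: "cnj w * cnj w = (-\<i>)^k"
    using arg_cong[OF ww, of cnj] by simp
  have cw: "w * cnj w = 1" unfolding w_def by (simp add: cis_cnj cis_mult)
  have hh: "h*h = 1/2" unfolding h_def using s2 by (simp add: field_simps)
  have ch: "cnj h = h" unfolding h_def by simp
  have "Gf \<sigma> (U0 0 0 * ket_plus (real k * pi / 4) 0 + U0 0 1 * ket_plus (real k * pi / 4) 1)
           (U0 1 0 * ket_plus (real k * pi / 4) 0 + U0 1 1 * ket_plus (real k * pi / 4) 1) = 
     (\<sigma> 0 0 + \<sigma> 3 3) * (1/2 + (2 + \<i>*(cnj w*cnj w) - \<i>*(w*w))/12)
     + (\<sigma> 0 3 + \<sigma> 3 0 + \<sigma> 1 1 + \<sigma> 2 2) * (1/2 - (2 + \<i>*(cnj w*cnj w) - \<i>*(w*w))/12)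
     + (\<sigma> 1 2 + \<sigma> 2 1) * ((complex_of_real cc * complex_of_real cc - complex_of_real ss * complex_of_real ss)*(w*w + cnj w*cnj w)/4)"
  proof (rule trapalg[OF _ _ EE1 cw hh ch C1 C6 EE2 EE2c])
    show "U0 0 0 * ket_plus (real k * pi / 4) 0 + U0 0 1 * ket_plus (real k * pi / 4) 1 =
      complex_of_real cc * h - cnj EE * complex_of_real ss * w * h"
      by (simp add: U0_def ket_plus_def w_def h_def)
    show "U0 1 0 * ket_plus (real k * pi / 4) 0 + U0 1 1 * ket_plus (real k * pi / 4) 1 =
      EE * complex_of_real ss * h + complex_of_real cc * w * h"
      by (simp add: U0_def ket_plus_def w_def h_def)
  qed simp_all
  then show ?thesis unfolding rot ww cww .
qed

lemma sum8: "(\<Sum>k<(8::nat). f k) = f 0 + f 1 + f 2 + f 3 + f 4 + f 5 + f 6 + f 7"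
  by (simp add: eval_nat_numeral)

lemma ipw: "\<i>^2 = -1" "\<i>^3 = -\<i>" "\<i>^4 = 1" "\<i>^5 = \<i>" "\<i>^6 = -1" "\<i>^7 = -\<i>"
  "(-\<i>)^2 = -1" "(-\<i>)^3 = \<i>" "(-\<i>)^4 = 1" "(-\<i>)^5 = -\<i>" "(-\<i>)^6 = -1" "(-\<i>)^7 = \<i>"
  by (simp_all add: eval_nat_numeral)

lemma Theta_img: "Theta = (\<lambda>k. real k * pi / 4) ` {..<8}"
  unfolding Theta_def by auto

lemma trap: "F_trap \<sigma> U0 = Fval \<sigma>"
proof -
  have inj: "inj_on (\<lambda>k. real k * pi / 4) {..<8}"
    by (auto simp: inj_on_def)
  have "F_trap \<sigma> U0 = (\<Sum>k<8. expect (ket_plus (real k * pi/4)) (tele_rot \<sigma> U0 (ket_bra (ket_plus (real k * pi/4))))) / 8"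
    unfolding F_trap_def Theta_img sum.reindex[OF inj] by simp
  also have "\<dots> = Fval \<sigma>"
    unfolding trapk sum8 Fval_def ipw by (simp add: field_simps)
  finally show ?thesis .
qed

theorem lemma4:
  fixes \<sigma> :: cmat
  assumes "density 4 \<sigma>"
  shows "\<exists>U. unitary 2 U \<and> F_dummy \<sigma> U = F_tel \<sigma> \<and> F_trap \<sigma> U = F_tel \<sigma>"
  using unitU0 dummy trap Ftel by metis


end
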